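(* Let $F,G:\mathbb{F}_{2^n}\to\mathbb{F}_{2^n}$ be extended-affine (EA) equivalent, i.e. CCZ-equivalent via an affine permutation $\mathcal{A}(u)=\begin{pmatrix}\mathcal{A}_{11}&0\\ \mathcal{A}_{21}&\mathcal{A}_{22}\end{pmatrix}u+\begin{pmatrix}C\\ D\end{pmatrix}$ of $\mathbb{F}_{2^n}\times\mathbb{F}_{2^n}$ with $\{(x,G(x)):x\in\mathbb{F}_{2^n}\}=\{\mathcal{A}(x,F(x)):x\in\mathbb{F}_{2^n}\}$. Then for all $a,b,c\in\mathbb{F}_{2^n}$, $$\mathrm{LBCT}_F(a,b,c)=\mathrm{LBCT}_G(\mathcal{A}_{11}a,\ \mathcal{A}_{11}b,\ \mathcal{A}_{22}c+\mathcal{A}_{21}b),$$ and the map $(a,b,c)\mapsto(\mathcal{A}_{11}a,\mathcal{A}_{11}b,\mathcal{A}_{22}c+\mathcal{A}_{21}b)$ is a bijection of $\mathbb{F}_{2^n}^3$; hence the LBCT spectrum is preserved under EA-equivalence.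
   Context: Elements of $\mathbb{F}_{2^n}$ are identified with vectors of $\mathbb{F}_2^n$; $\mathcal{A}_{ij}$ are $\mathbb{F}_2$-linear maps of $\mathbb{F}_{2^n}$, $C,D\in\mathbb{F}_{2^n}$, and $\mathcal{A}$ is bijective. For any function $H:\mathbb{F}_{2^n}\to\mathbb{F}_{2^n}$, $$\mathrm{LBCT}_H(a,b,c)=\left|\left\{X\in\mathbb{F}_{2^n} : \exists\,Y\in\mathbb{F}_{2^n}\text{ with } X+Y=b,\ H(X+a)+H(Y+a)=c,\ H(X)+H(Y)=c\right\}\right|.$$ *)

theory Defs
  imports Main
begin

text \<open>F_2-linear map of a field of characteristic 2, viewed as an F_2-vector space:
  scalars are only 0 and 1, so F_2-linearity is exactly additivity.\<close>
definition f2_linear :: "('a::field \<Rightarrow> 'a) \<Rightarrow> bool" where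
  "f2_linear L \<longleftrightarrow> (\<forall>x y. L (x + y) = L x + L y)"

definition LBCT :: "('a::field \<Rightarrow> 'a) \<Rightarrow> 'a \<Rightarrow> 'a \<Rightarrow> 'a \<Rightarrow> nat" where
  "LBCT H a b c = card {X. \<exists>Y. X + Y = b \<and> H (X + a) + H (Y + a) = c \<and> H X + H Y = c}"

end

theory Submission
  imports Defs
begin

lemma char2_add_self:
  assumes "CHAR('a::field) = 2"
  shows "(x::'a) + x = 0"
proof -
  have "(of_nat CHAR('a) :: 'a) = 0" by (rule of_nat_CHAR)
  hence "(of_nat 2 :: 'a) = 0" unfolding assms .
  hence "(2::'a) = 0" by (simp only: of_nat_numeral)
  hence "2 * x = 0" by (simp only: mult_zero_left)
  thus ?thesis by (simp only: mult_2)
qed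

theorem mainTheorem4:
  fixes F G :: "'a::{field,finite} \<Rightarrow> 'a"
    and A11 A21 A22 :: "'a \<Rightarrow> 'a"
    and C D :: 'a
  assumes char2: "CHAR('a) = 2"
    and lin: "f2_linear A11" "f2_linear A21" "f2_linear A22"
    and bijA: "bij (\<lambda>(x, y). (A11 x + C, A21 x + A22 y + D))"
    and graph: "{(x, G x) | x. True} = (\<lambda>(x, y). (A11 x + C, A21 x + A22 y + D)) ` {(x, F x) | x. True}"
  shows "(\<forall>a b c. LBCT F a b c = LBCT G (A11 a) (A11 b) (A22 c + A21 b))
       \<and> bij (\<lambda>(a, b, c). (A11 a, A11 b, A22 c + A21 b))"
proof -
  have ss: "\<And>x::'a. x + x = 0" using char2_add_self[OF char2] .
  have ss2: "\<And>x y::'a. x + (x + y) = y"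
  proof -
    fix x y :: 'a
    have "x + (x + y) = (x + x) + y" by (simp add: add.assoc)
    thus "x + (x + y) = y" by (simp add: ss)
  qed
  have L11: "\<And>x y. A11 (x + y) = A11 x + A11 y" using lin(1) by (simp add: f2_linear_def)
  have L21: "\<And>x y. A21 (x + y) = A21 x + A21 y" using lin(2) by (simp add: f2_linear_def)
  have L22: "\<And>x y. A22 (x + y) = A22 x + A22 y" using lin(3) by (simp add: f2_linear_def)
  let ?A = "\<lambda>(x, y). (A11 x + C, A21 x + A22 y + D)"
  have surj11: "surj A11"
  proof -
    { fix u
      have "surj ?A" using bijA by (simp add: bij_def)
      then obtain p where "(u - C, 0) = ?A p" by (rule surjE)
      then obtain x y where "(u - C, 0) = ?A (x, y)" by (cases p) auto
      hence "u - C = A11 x + C" by simp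
      hence "A11 x = u - C - C" by (simp add: algebra_simps)
      also have "u - C - C = u" using ss[of C] by (simp add: algebra_simps)
      finally have "A11 x = u" .
      hence "u \<in> range A11" by auto }
    thus ?thesis by auto
  qed
  have inj11: "inj A11" using finite_UNIV_surj_inj[OF finite_UNIV surj11] .
  have inj22: "inj A22"
  proof (rule injI)
    fix y y' assume "A22 y = A22 y'"
    hence "?A (0, y) = ?A (0, y')" by simp
    moreover have "inj ?A" using bijA by (simp add: bij_def)
    ultimately have "(0::'a, y) = (0, y')" by (rule injD[rotated])
    thus "y = y'" by simp
  qed
  have Geq: "\<And>x. G (A11 x + C) = A21 x + A22 (F x) + D"
  proof -
    fix x
    have "(A11 x + C, A21 x + A22 (F x) + D) \<in> {(x, G x) | x. True}"
      using graph by auto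
    thus "G (A11 x + C) = A21 x + A22 (F x) + D" by auto
  qed
  have Gsum: "\<And>u v. G (A11 u + C) + G (A11 v + C) = A21 (u + v) + A22 (F u + F v)"
  proof -
    fix u v
    have "G (A11 u + C) + G (A11 v + C) = (A21 u + A21 v) + (A22 (F u) + A22 (F v)) + (D + D)"
      unfolding Geq by (simp only: ac_simps)
    thus "G (A11 u + C) + G (A11 v + C) = A21 (u + v) + A22 (F u + F v)"
      by (simp add: ss L21 L22)
  qed
  have exY: "\<And>(X::'a) b P. (\<exists>Y. X + Y = b \<and> P Y) \<longleftrightarrow> P (X + b)"
  proof -
    fix X b :: 'a and P
    have "\<And>Y. X + Y = b \<longleftrightarrow> Y = X + b"
      using ss2 by (metis add.commute)
    thus "(\<exists>Y. X + Y = b \<and> P Y) \<longleftrightarrow> P (X + b)" by auto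
  qed
  have part1: "\<And>a b c. LBCT F a b c = LBCT G (A11 a) (A11 b) (A22 c + A21 b)"
  proof -
    fix a b c
    define h where "h = (\<lambda>X. A11 X + C)"
    have injh: "inj h" unfolding h_def using inj11 by (simp add: inj_on_def)
    have surjh: "surj h"
    proof -
      { fix u obtain x where "u + C = A11 x" using surj11 by (rule surjE)
        hence "h x = u" unfolding h_def using ss2[of C u] \<open>u + C = A11 x\<close> by (simp add: ac_simps)
        hence "u \<in> range h" by auto }
      thus ?thesis by auto
    qed
    let ?SF = "{X. \<exists>Y. X + Y = b \<and> F (X + a) + F (Y + a) = c \<and> F X + F Y = c}"
    let ?SG = "{X. \<exists>Y. X + Y = A11 b \<and> G (X + A11 a) + G (Y + A11 a) = A22 c + A21 b
                   \<and> G X + G Y = A22 c + A21 b}"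
    have eqs: "?SF = h -` ?SG"
    proof (rule set_eqI)
      fix X
      have e1: "A11 X + C + A11 b = A11 (X + b) + C" by (simp add: L11 ac_simps)
      have e2: "A11 X + C + A11 a = A11 (X + a) + C" by (simp add: L11 ac_simps)
      have e3: "A11 (X + b) + C + A11 a = A11 (X + b + a) + C" by (simp add: L11 ac_simps)
      have k: "G (A11 u + C) + G (A11 v + C) = A22 c + A21 b \<longleftrightarrow> F u + F v = c"
        if "u + v = b" for u v
      proof -
        have "G (A11 u + C) + G (A11 v + C) = A22 (F u + F v) + A21 b"
          using Gsum[of u v] that by (simp add: add.commute)
        moreover have "A22 (F u + F v) + A21 b = A22 c + A21 b \<longleftrightarrow> F u + F v = c"
          using inj22 by (auto dest: injD)
        ultimately show ?thesis by simp
      qed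
      have s1: "X + (X + b) = b" using ss2 by simp
      have s2: "X + a + (X + b + a) = b"
      proof -
        have "X + a + (X + b + a) = X + (X + (a + (a + b)))" by (simp add: ac_simps)
        thus ?thesis using ss2 by simp
      qed
      have "X \<in> ?SF \<longleftrightarrow> F (X + a) + F (X + b + a) = c \<and> F X + F (X + b) = c"
        using exY[of X b "\<lambda>Y. F (X + a) + F (Y + a) = c \<and> F X + F Y = c"] by simp
      also have "\<dots> \<longleftrightarrow> G (A11 (X + a) + C) + G (A11 (X + b + a) + C) = A22 c + A21 b
             \<and> G (A11 X + C) + G (A11 (X + b) + C) = A22 c + A21 b"
        using k[OF s1] k[OF s2] by simp
      also have "\<dots> \<longleftrightarrow> h X \<in> ?SG"
        using exY[of "h X" "A11 b" "\<lambda>Y. G (h X + A11 a) + G (Y + A11 a) = A22 c + A21 b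
                   \<and> G (h X) + G Y = A22 c + A21 b"] 
        by (simp only: h_def e1 e2 e3 mem_Collect_eq)
      finally show "X \<in> ?SF \<longleftrightarrow> X \<in> h -` ?SG" by simp
    qed
    have "card (h -` ?SG) = card (h ` (h -` ?SG))"
      using injh by (simp add: card_image inj_on_subset)
    also have "h ` (h -` ?SG) = ?SG" by (rule surj_image_vimage_eq[OF surjh])
    finally show "LBCT F a b c = LBCT G (A11 a) (A11 b) (A22 c + A21 b)"
      unfolding LBCT_def using eqs by simp
  qed
  have "inj (\<lambda>(a, b, c). (A11 a, A11 b, A22 c + A21 b))"
  proof (rule injI)
    fix p q :: "'a \<times> 'a \<times> 'a"
    assume h: "(\<lambda>(a, b, c). (A11 a, A11 b, A22 c + A21 b)) p = (\<lambda>(a, b, c). (A11 a, A11 b, A22 c + A21 b)) q"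
    obtain a b c where p: "p = (a, b, c)" by (cases p) auto
    obtain a' b' c' where q: "q = (a', b', c')" by (cases q) auto
    have "a = a'" "b = b'" using h p q inj11 by (auto dest: injD)
    moreover have "A22 c = A22 c'" using h p q \<open>b = b'\<close> by simp
    hence "c = c'" using inj22 by (auto dest: injD)
    ultimately show "p = q" using p q by simp
  qed
  hence "bij (\<lambda>(a, b, c). (A11 a, A11 b, A22 c + A21 b))"
    using finite_UNIV_inj_surj[OF finite_UNIV] bij_def by blast
  with part1 show ?thesis by blast
qed

end
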